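(* There exist universal constants $c_{\lambda_0}>0$ and $C>0$ such that the following holds. In the setting described in the context, let $\lambda\ge 0$ and $\lambda_0\geq c_{\lambda_0}\sigma^2\log(ep)/n$, and let $(\hat\alpha,\hat{\boldsymbol\beta})$ be any global minimiser of $$\frac1n\|\boldsymbol y-\alpha\mathbf 1-\boldsymbol X\boldsymbol\beta\|_2^2+\lambda_0\|\boldsymbol\beta\|_0+\lambda\sum_{j=1}^q\big|\{\beta_k:k\in\mathcal I_j\}\big|$$ over $\alpha\in\mathbb R,\boldsymbol\beta\in\mathbb R^p$. Then, with probability at least $1-4(ep)^{-9}$, $$\frac1n\|\mathbf f^*-\boldsymbol X\hat{\boldsymbol\beta}-\hat\alpha\mathbf 1\|_2^2+\lambda\hat K\le C\Big(\inf_{\boldsymbol\beta\in\mathbb R^p,\alpha\in\mathbb R}\Big\{\frac1n\|\mathbf f^*-\boldsymbol X\boldsymbol\beta-\alpha\mathbf 1\|_2^2+\lambda_0\|\boldsymbol\beta\|_0+\lambda K(\boldsymbol\beta)\Big\}+\frac{\sigma^2\log(ep)}{n}\Big).$$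
   Context: Setting: $q\ge1$ categorical predictors, the $j$-th taking values in $[p_j]=\{1,\dots,p_j\}$, and $N\ge0$ continuous predictors; $p=N+\sum_{j=1}^q p_j$. There are $n$ observations; observation $i$ has categorical values $C^{(i)}_j\in[p_j]$ and continuous values $W^{(i)}_1,\dots,W^{(i)}_N$. The design matrix $\boldsymbol X\in\mathbb R^{n\times p}$ has $i$-th row $(\mathbf 1(C^{(i)}_1=1),\dots,\mathbf 1(C^{(i)}_1=p_1),\dots,\mathbf 1(C^{(i)}_q=1),\dots,\mathbf 1(C^{(i)}_q=p_q),W^{(i)}_1,\dots,W^{(i)}_N)$, where $\mathbf 1(\cdot)$ is the indicator. $\mathcal I_1=\{1,\dots,p_1\}$, $\mathcal I_2=\{p_1+1,\dots,p_1+p_2\}$, etc., are the column index sets of the dummy variables of the categorical predictors. The data are $\boldsymbol y=\mathbf f^*+\boldsymbol\epsilon$ where $\mathbf f^*\in\mathbb R^n$ (an arbitrary mean vector, no model assumed) and $\boldsymbol X$ are deterministic and $\boldsymbol\epsilon\sim\mathcal N(\mathbf 0,\sigma^2\boldsymbol I_n)$. $\mathbf 1\in\mathbb R^n$ also denotes the all-ones vector. $\|\boldsymbol\beta\|_0$ is the number of nonzero entries. For $\boldsymbol\beta\in\mathbb R^p$, $K(\boldsymbol\beta)=\sum_{j=1}^q|\{\beta_i:i\in\mathcal I_j,\beta_i\ne0\}|$ (total number of distinct nonzero coefficient values, counted per categorical predictor), and $\hat K=K(\hat{\boldsymbol\beta})$. Universal constants do not depend on $n,p,q,N,\sigma,\mathbf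 f^*,\boldsymbol X,\lambda,\lambda_0$. *)

theory Defs
  imports "HOL-Probability.Probability"
begin

text \<open>Categorical predictors are indexed j = 1..q, with levels 1..pj j.
Columns of the design matrix are indexed 0..<p (0-based). Observations are i = 0..<n,
continuous predictors k = 1..N.\<close>

definition Pcat :: "nat \<Rightarrow> (nat \<Rightarrow> nat) \<Rightarrow> nat" where
  "Pcat q pj = (\<Sum>j\<in>{1..q}. pj j)"

definition ptot :: "nat \<Rightarrow> (nat \<Rightarrow> nat) \<Rightarrow> nat \<Rightarrow> nat" where
  "ptot q pj N = N + Pcat q pj"

definition offs :: "(nat \<Rightarrow> nat) \<Rightarrow> nat \<Rightarrow> nat" where
  "offs pj j = (\<Sum>i\<in>{1..<j}. pj i)"

definition Iset :: "(nat \<Rightarrow> nat) \<Rightarrow> nat \<Rightarrow> nat set" where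
  "Iset pj j = {offs pj j ..< offs pj j + pj j}"

text \<open>Entry (i,c) of the design matrix; Cv i j = value of categorical predictor j for
observation i, W i k = value of continuous predictor k for observation i.\<close>
definition design :: "nat \<Rightarrow> (nat \<Rightarrow> nat) \<Rightarrow> nat \<Rightarrow> (nat \<Rightarrow> nat \<Rightarrow> nat)
    \<Rightarrow> (nat \<Rightarrow> nat \<Rightarrow> real) \<Rightarrow> nat \<Rightarrow> nat \<Rightarrow> real" where
  "design q pj N Cv W i c =
     (\<Sum>j\<in>{1..q}. if c \<in> Iset pj j \<and> Cv i j = c - offs pj j + 1 then 1 else 0)
     + (if Pcat q pj \<le> c \<and> c < ptot q pj N then W i (c - Pcat q pj + 1) else 0)"

definition Xb :: "nat \<Rightarrow> (nat \<Rightarrow> nat) \<Rightarrow> nat \<Rightarrow> (nat \<Rightarrow> nat \<Rightarrow> nat)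
    \<Rightarrow> (nat \<Rightarrow> nat \<Rightarrow> real) \<Rightarrow> (nat \<Rightarrow> real) \<Rightarrow> nat \<Rightarrow> real" where
  "Xb q pj N Cv W \<beta> i = (\<Sum>c<ptot q pj N. design q pj N Cv W i c * \<beta> c)"

definition l0 :: "nat \<Rightarrow> (nat \<Rightarrow> real) \<Rightarrow> nat" where
  "l0 p \<beta> = card {k\<in>{..<p}. \<beta> k \<noteq> 0}"

definition nvals :: "nat \<Rightarrow> (nat \<Rightarrow> nat) \<Rightarrow> (nat \<Rightarrow> real) \<Rightarrow> nat" where
  "nvals q pj \<beta> = (\<Sum>j\<in>{1..q}. card (\<beta> ` Iset pj j))"

definition Kfun :: "nat \<Rightarrow> (nat \<Rightarrow> nat) \<Rightarrow> (nat \<Rightarrow> real) \<Rightarrow> nat" where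
  "Kfun q pj \<beta> = (\<Sum>j\<in>{1..q}. card (\<beta> ` Iset pj j - {0}))"

definition sqnorm :: "nat \<Rightarrow> (nat \<Rightarrow> real) \<Rightarrow> real" where
  "sqnorm n v = (\<Sum>i<n. (v i)\<^sup>2)"

definition noise_space :: "nat \<Rightarrow> real \<Rightarrow> (nat \<Rightarrow> real) measure" where
  "noise_space n \<sigma> = PiM {..<n} (\<lambda>_. density lborel (normal_density 0 \<sigma>))"

definition objective :: "nat \<Rightarrow> nat \<Rightarrow> (nat \<Rightarrow> nat) \<Rightarrow> nat \<Rightarrow> (nat \<Rightarrow> nat \<Rightarrow> nat)
    \<Rightarrow> (nat \<Rightarrow> nat \<Rightarrow> real) \<Rightarrow> real \<Rightarrow> real \<Rightarrow> (nat \<Rightarrow> real) \<Rightarrow> real \<Rightarrow> (nat \<Rightarrow> real) \<Rightarrow> real" where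
  "objective n q pj N Cv W lam lam0 y \<alpha> \<beta> =
     sqnorm n (\<lambda>i. y i - \<alpha> - Xb q pj N Cv W \<beta> i) / real n
     + lam0 * real (l0 (ptot q pj N) \<beta>) + lam * real (nvals q pj \<beta>)"

definition risk :: "nat \<Rightarrow> nat \<Rightarrow> (nat \<Rightarrow> nat) \<Rightarrow> nat \<Rightarrow> (nat \<Rightarrow> nat \<Rightarrow> nat)
    \<Rightarrow> (nat \<Rightarrow> nat \<Rightarrow> real) \<Rightarrow> real \<Rightarrow> real \<Rightarrow> (nat \<Rightarrow> real) \<Rightarrow> real \<Rightarrow> (nat \<Rightarrow> real) \<Rightarrow> real" where
  "risk n q pj N Cv W lam lam0 f \<alpha> \<beta> =
     sqnorm n (\<lambda>i. f i - Xb q pj N Cv W \<beta> i - \<alpha>) / real n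
     + lam0 * real (l0 (ptot q pj N) \<beta>) + lam * real (Kfun q pj \<beta>)"

end

theory Submission
  imports Defs
begin

lemma nn_integral_normal_density_1:
  "\<sigma> > 0 \<Longrightarrow> (\<integral>\<^sup>+x. ennreal (normal_density \<mu> \<sigma> x) \<partial>lborel) = 1"
  by (subst nn_integral_eq_integral[OF integrable_normal_density]) auto

lemma normal_mgf:
  assumes "\<sigma> > 0"
  shows "(\<integral>\<^sup>+x. ennreal (exp (a*x)) \<partial>density lborel (normal_density 0 \<sigma>)) = ennreal (exp (a^2*\<sigma>^2/2))"
proof -
  have eq: "normal_density 0 \<sigma> x * exp (a*x) = exp (a^2*\<sigma>^2/2) * normal_density (a*\<sigma>^2) \<sigma> x" for x
  proof -
    have "- ((x - 0)^2)/(2*\<sigma>^2) + a*x = a^2*\<sigma>^2/2 + (- ((x - a*\<sigma>^2)^2)/(2*\<sigma>^2))"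
      using assms by (simp add: field_simps power2_eq_square)
    then have "exp (- ((x - 0)^2)/(2*\<sigma>^2)) * exp (a*x) = exp (a^2*\<sigma>^2/2) * exp (- ((x - a*\<sigma>^2)^2)/(2*\<sigma>^2))"
      by (metis exp_add)
    then show ?thesis unfolding normal_density_def by (simp add: algebra_simps)
  qed
  have "(\<integral>\<^sup>+x. ennreal (exp (a*x)) \<partial>density lborel (normal_density 0 \<sigma>))
      = (\<integral>\<^sup>+x. ennreal (normal_density 0 \<sigma> x) * ennreal (exp (a*x)) \<partial>lborel)"
    by (subst nn_integral_density) auto
  also have "\<dots> = (\<integral>\<^sup>+x. ennreal (exp (a^2*\<sigma>^2/2)) * ennreal (normal_density (a*\<sigma>^2) \<sigma> x) \<partial>lborel)"
    by (intro nn_integral_cong) (simp add: ennreal_mult'[symmetric] eq)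
  also have "\<dots> = ennreal (exp (a^2*\<sigma>^2/2))"
    by (subst nn_integral_cmult) (auto simp: nn_integral_normal_density_1 assms)
  finally show ?thesis .
qed

lemma normal_sq_mgf:
  shows "(\<integral>\<^sup>+x. ennreal (exp (x^2/4)) \<partial>density lborel (normal_density 0 1)) = ennreal (sqrt 2)"
proof -
  define r where "r = sqrt 2"
  have r: "r > 0" "r^2 = 2" "r*r = 2" by (auto simp: r_def)
  have eq: "normal_density 0 1 x * exp (x^2/4) = r * normal_density 0 r x" for x
  proof -
    have "exp (- ((x - 0)^2)/(2*1^2)) * exp (x^2/4) = exp (- ((x - 0)^2)/(2*(r^2)))"
      using r by (simp add: exp_add[symmetric] field_simps power2_eq_square)
    moreover have "1 / sqrt (2*pi*1^2) = r * (1 / sqrt (2*pi*r^2))"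
      using r by (simp add: r_def real_sqrt_mult field_simps)
    ultimately show ?thesis unfolding normal_density_def by (simp add: algebra_simps)
  qed
  have "(\<integral>\<^sup>+x. ennreal (exp (x^2/4)) \<partial>density lborel (normal_density 0 1))
      = (\<integral>\<^sup>+x. ennreal (normal_density 0 1 x) * ennreal (exp (x^2/4)) \<partial>lborel)"
    by (subst nn_integral_density) auto
  also have "\<dots> = (\<integral>\<^sup>+x. ennreal r * ennreal (normal_density 0 r x) \<partial>lborel)"
    using r(1) by (intro nn_integral_cong) (simp add: ennreal_mult'[symmetric] eq)
  also have "\<dots> = ennreal r"
    by (subst nn_integral_cmult) (auto simp: nn_integral_normal_density_1 r)
  finally show ?thesis by (simp add: r_def)
qed


definition ip :: "nat \<Rightarrow> (nat \<Rightarrow> real) \<Rightarrow> (nat \<Rightarrow> real) \<Rightarrow> real" where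
  "ip n u v = (\<Sum>i<n. u i * v i)"

definition orthonormal :: "nat \<Rightarrow> (nat \<Rightarrow> nat \<Rightarrow> real) \<Rightarrow> nat \<Rightarrow> bool" where
  "orthonormal n us d = (\<forall>k<d. \<forall>l<d. ip n (us k) (us l) = (if k = l then 1 else 0))"

lemma prob_space_noise: "\<sigma> > 0 \<Longrightarrow> prob_space (noise_space n \<sigma>)"
  unfolding noise_space_def
  by (intro prob_space_PiM prob_space_normal_density)

lemma product_prob_space_normal: "\<sigma> > 0 \<Longrightarrow> product_prob_space (\<lambda>_. density lborel (normal_density 0 \<sigma>))"
proof -
  assume s: "\<sigma> > 0"
  have ps: "prob_space (density lborel (normal_density 0 \<sigma>))" using prob_space_normal_density s by auto
  show ?thesis
    by (auto simp: product_prob_space_def product_sigma_finite_def product_prob_space_axioms_def ps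
       prob_space_imp_sigma_finite)
qed

lemma prod_mgf:
  assumes "\<sigma> > 0"
  shows "(\<integral>\<^sup>+\<epsilon>. ennreal (exp (\<Sum>i<n. w i * \<epsilon> i)) \<partial>noise_space n \<sigma>)
       = ennreal (exp (\<sigma>^2 * (\<Sum>i<n. (w i)^2) / 2))"
proof -
  interpret P: product_prob_space "\<lambda>_. density lborel (normal_density 0 \<sigma>)"
    using product_prob_space_normal assms by auto
  have "(\<integral>\<^sup>+\<epsilon>. ennreal (exp (\<Sum>i<n. w i * \<epsilon> i)) \<partial>noise_space n \<sigma>)
      = (\<integral>\<^sup>+\<epsilon>. (\<Prod>i\<in>{..<n}. (\<lambda>i x. ennreal (exp (w i * x))) i (\<epsilon> i)) \<partial>noise_space n \<sigma>)"
    by (intro nn_integral_cong) (simp add: exp_sum prod_ennreal)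
  also have "\<dots> = (\<Prod>i\<in>{..<n}. ennreal (exp ((w i)^2 * \<sigma>^2/2)))"
    unfolding noise_space_def
    by (subst P.product_nn_integral_prod) (auto simp: normal_mgf assms)
  also have "\<dots> = ennreal (exp (\<sigma>^2 * (\<Sum>i<n. (w i)^2) / 2))"
    by (simp add: prod_ennreal exp_sum[symmetric] sum_divide_distrib sum_distrib_left algebra_simps)
  finally show ?thesis .
qed

lemma prod_sq_mgf:
  shows "(\<integral>\<^sup>+g. ennreal (exp (\<Sum>k<d. (g k)^2/4)) \<partial>noise_space d 1) = ennreal (sqrt 2 ^ d)"
proof -
  interpret P: product_prob_space "\<lambda>_. density lborel (normal_density 0 1)"
    using product_prob_space_normal[of 1] by auto
  have "(\<integral>\<^sup>+g. ennreal (exp (\<Sum>k<d. (g k)^2/4)) \<partial>noise_space d 1)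
      = (\<integral>\<^sup>+g. (\<Prod>i\<in>{..<d}. (\<lambda>i x. ennreal (exp (x^2/4))) i (g i)) \<partial>noise_space d 1)"
    by (intro nn_integral_cong) (simp add: exp_sum prod_ennreal)
  also have "\<dots> = (\<Prod>i\<in>{..<d}. ennreal (sqrt 2))"
    unfolding noise_space_def
    by (subst P.product_nn_integral_prod) (auto simp: normal_sq_mgf)
  also have "\<dots> = ennreal (sqrt 2 ^ d)"
    by (simp add: ennreal_power)
  finally show ?thesis .
qed


lemma orth_expand:
  assumes "orthonormal n us d"
  shows "(\<Sum>i<n. (\<Sum>k<d. g k * us k i)^2) = (\<Sum>k<d. (g k)^2)"
proof -
  have "(\<Sum>i<n. (\<Sum>k<d. g k * us k i)^2) = (\<Sum>i<n. \<Sum>k<d. \<Sum>l<d. g k * g l * (us k i * us l i))"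
    by (simp add: power2_eq_square sum_product algebra_simps)
  also have "\<dots> = (\<Sum>k<d. \<Sum>l<d. g k * g l * ip n (us k) (us l))"
    unfolding ip_def by (simp add: sum_distrib_left sum.swap[of _ "{..<n}"])
  also have "\<dots> = (\<Sum>k<d. \<Sum>l<d. if l = k then g k * g k else 0)"
    using assms unfolding orthonormal_def by (intro sum.cong) auto
  also have "\<dots> = (\<Sum>k<d. (g k)^2)"
    by (simp add: power2_eq_square)
  finally show ?thesis .
qed

lemma chi_mgf:
  assumes s: "\<sigma> > 0" and on: "orthonormal n us d"
  shows "(\<integral>\<^sup>+\<epsilon>. ennreal (exp ((\<Sum>k<d. (ip n (us k) \<epsilon>)^2) / (4*\<sigma>^2))) \<partial>noise_space n \<sigma>)
      = ennreal (sqrt 2 ^ d)"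
proof -
  define c where "c = sqrt 2 * \<sigma>"
  have c: "c > 0" "c^2 = 2*\<sigma>^2" using s by (auto simp: c_def power_mult_distrib)
  interpret N: prob_space "noise_space n \<sigma>" using prob_space_noise s by auto
  interpret G: prob_space "noise_space d 1" using prob_space_noise[of 1] by auto
  interpret NG: pair_sigma_finite "noise_space n \<sigma>" "noise_space d 1"
    by unfold_locales
  have st1: "ennreal (exp ((\<Sum>k<d. (ip n (us k) \<epsilon>)^2) / (4*\<sigma>^2)))
      = (\<integral>\<^sup>+g. ennreal (exp (\<Sum>k<d. (ip n (us k) \<epsilon> / c) * g k)) \<partial>noise_space d 1)" for \<epsilon>
  proof -
    have "(\<Sum>k<d. (ip n (us k) \<epsilon>)^2) / (4*\<sigma>^2) = 1^2 * (\<Sum>k<d. (ip n (us k) \<epsilon> / c)^2) / 2"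
      using c s by (simp add: power_divide sum_divide_distrib[symmetric])
    then show ?thesis using prod_mgf[where \<sigma>=1 and w="\<lambda>k. ip n (us k) \<epsilon> / c" and n=d] by simp
  qed
  have st3: "(\<integral>\<^sup>+\<epsilon>. ennreal (exp (\<Sum>k<d. (ip n (us k) \<epsilon> / c) * g k)) \<partial>noise_space n \<sigma>)
      = ennreal (exp (\<Sum>k<d. (g k)^2/4))" for g
  proof -
    have "(\<Sum>k<d. (ip n (us k) \<epsilon> / c) * g k) = (\<Sum>i<n. (\<Sum>k<d. g k * us k i / c) * \<epsilon> i)" for \<epsilon>
      unfolding ip_def by (simp add: sum_distrib_left sum_distrib_right sum_divide_distrib sum.swap[of _ "{..<n}"] algebra_simps)
    then have "(\<integral>\<^sup>+\<epsilon>. ennreal (exp (\<Sum>k<d. (ip n (us k) \<epsilon> / c) * g k)) \<partial>noise_space n \<sigma>)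
       = ennreal (exp (\<sigma>^2 * (\<Sum>i<n. (\<Sum>k<d. g k * us k i / c)^2) / 2))"
      by (simp add: prod_mgf s)
    also have "(\<Sum>i<n. (\<Sum>k<d. g k * us k i / c)^2) = (\<Sum>i<n. (\<Sum>k<d. g k * us k i)^2) / c^2"
      by (simp add: sum_divide_distrib[symmetric] power_divide)
    also have "\<dots> = (\<Sum>k<d. (g k)^2) / c^2" using orth_expand[OF on] by simp
    also have "\<sigma>^2 * ((\<Sum>k<d. (g k)^2) / c^2) / 2 = (\<Sum>k<d. (g k)^2/4)"
      using c s by (simp add: sum_divide_distrib[symmetric])
    finally show ?thesis .
  qed
  have meas: "(\<lambda>(\<epsilon>, g). ennreal (exp (\<Sum>k<d. (ip n (us k) \<epsilon> / c) * g k)))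
      \<in> borel_measurable (noise_space n \<sigma> \<Otimes>\<^sub>M noise_space d 1)"
    unfolding ip_def noise_space_def by measurable
  have "(\<integral>\<^sup>+\<epsilon>. ennreal (exp ((\<Sum>k<d. (ip n (us k) \<epsilon>)^2) / (4*\<sigma>^2))) \<partial>noise_space n \<sigma>)
     = (\<integral>\<^sup>+\<epsilon>. (\<integral>\<^sup>+g. ennreal (exp (\<Sum>k<d. (ip n (us k) \<epsilon> / c) * g k)) \<partial>noise_space d 1) \<partial>noise_space n \<sigma>)"
    using st1 by simp
  also have "\<dots> = (\<integral>\<^sup>+g. (\<integral>\<^sup>+\<epsilon>. ennreal (exp (\<Sum>k<d. (ip n (us k) \<epsilon> / c) * g k)) \<partial>noise_space n \<sigma>) \<partial>noise_space d 1)"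
    using NG.Fubini'[OF meas] by simp
  also have "\<dots> = (\<integral>\<^sup>+g. ennreal (exp (\<Sum>k<d. (g k)^2/4)) \<partial>noise_space d 1)"
    using st3 by simp
  also have "\<dots> = ennreal (sqrt 2 ^ d)" by (rule prod_sq_mgf)
  finally show ?thesis .
qed


lemma tail_bound:
  assumes s: "\<sigma> > 0" and on: "orthonormal n us d"
  shows "measure (noise_space n \<sigma>) {\<epsilon>\<in>space (noise_space n \<sigma>). x < (\<Sum>k<d. (ip n (us k) \<epsilon>)^2)}
      \<le> sqrt 2 ^ d * exp (- x / (4*\<sigma>^2))"
proof -
  interpret N: prob_space "noise_space n \<sigma>" using prob_space_noise s by auto
  let ?Q = "\<lambda>\<epsilon>. (\<Sum>k<d. (ip n (us k) \<epsilon>)^2)"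
  let ?u = "\<lambda>\<epsilon>. ennreal (exp (?Q \<epsilon> / (4*\<sigma>^2)))"
  let ?c = "ennreal (exp (- x / (4*\<sigma>^2)))"
  let ?S = "space (noise_space n \<sigma>)"
  have Qm[measurable]: "?Q \<in> borel_measurable (noise_space n \<sigma>)"
    unfolding ip_def noise_space_def by measurable
  have sub: "{\<epsilon>\<in>?S. x < ?Q \<epsilon>} \<subseteq> {\<epsilon>\<in>?S. 1 \<le> ?c * ?u \<epsilon>}"
  proof safe
    fix \<epsilon> assume "\<epsilon> \<in> ?S" "x < ?Q \<epsilon>"
    have "- x / (4*\<sigma>^2) + ?Q \<epsilon> / (4*\<sigma>^2) \<ge> 0"
      using \<open>x < ?Q \<epsilon>\<close> s by (simp add: divide_simps)
    then have "1 \<le> exp (- x / (4*\<sigma>^2)) * exp (?Q \<epsilon> / (4*\<sigma>^2))"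
      by (simp add: exp_add[symmetric])
    then show "1 \<le> ?c * ?u \<epsilon>"
      by (simp add: ennreal_mult'[symmetric])
  qed
  have "emeasure (noise_space n \<sigma>) {\<epsilon>\<in>?S. x < ?Q \<epsilon>} \<le> emeasure (noise_space n \<sigma>) {\<epsilon>\<in>?S. 1 \<le> ?c * ?u \<epsilon>}"
    by (rule emeasure_mono[OF sub]) measurable
  also have "\<dots> \<le> ?c * (\<integral>\<^sup>+\<epsilon>. ?u \<epsilon> * indicator ?S \<epsilon> \<partial>noise_space n \<sigma>)"
    by (rule nn_integral_Markov_inequality) auto
  also have "(\<integral>\<^sup>+\<epsilon>. ?u \<epsilon> * indicator ?S \<epsilon> \<partial>noise_space n \<sigma>) = (\<integral>\<^sup>+\<epsilon>. ?u \<epsilon> \<partial>noise_space n \<sigma>)"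
    by (intro nn_integral_cong) auto
  also have "\<dots> = ennreal (sqrt 2 ^ d)" by (rule chi_mgf[OF s on])
  finally have "emeasure (noise_space n \<sigma>) {\<epsilon>\<in>?S. x < ?Q \<epsilon>} \<le> ennreal (exp (- x / (4*\<sigma>^2)) * sqrt 2 ^ d)"
    by (simp add: ennreal_mult')
  then show ?thesis
    by (simp add: N.emeasure_eq_measure mult.commute)
qed


definition inspan :: "nat \<Rightarrow> (nat \<Rightarrow> nat \<Rightarrow> real) \<Rightarrow> nat \<Rightarrow> (nat \<Rightarrow> real) \<Rightarrow> bool" where
  "inspan n us d w = (\<forall>i<n. w i = (\<Sum>k<d. ip n w (us k) * us k i))"

lemma ip_sym: "ip n u v = ip n v u"
  unfolding ip_def by (simp add: mult.commute)

lemma ip_cong: "(\<And>i. i < n \<Longrightarrow> u i = u' i) \<Longrightarrow> (\<And>i. i < n \<Longrightarrow> v i = v' i) \<Longrightarrow> ip n u v = ip n u' v'"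
  unfolding ip_def by (intro sum.cong) auto

lemma ip_sum_left: "ip n (\<lambda>i. \<Sum>j\<in>J. a j * v j i) u = (\<Sum>j\<in>J. a j * ip n (v j) u)"
  unfolding ip_def by (simp add: sum_distrib_left sum_distrib_right sum.swap[of _ J] algebra_simps)

lemma ip_diff_left: "ip n (\<lambda>i. x i - y i) u = ip n x u - ip n y u"
  unfolding ip_def by (simp add: sum_subtractf algebra_simps)

lemma ip_scale_left: "ip n (\<lambda>i. x i / c) u = ip n x u / c"
  unfolding ip_def by (simp add: sum_divide_distrib)

lemma inspan_ip:
  assumes "inspan n us d w"
  shows "ip n w e = (\<Sum>k<d. ip n w (us k) * ip n (us k) e)"
proof -
  have "ip n w e = ip n (\<lambda>i. \<Sum>k<d. ip n w (us k) * us k i) e"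
    using assms unfolding inspan_def by (intro ip_cong) auto
  also have "\<dots> = (\<Sum>k<d. ip n w (us k) * ip n (us k) e)" by (rule ip_sum_left)
  finally show ?thesis .
qed

lemma inspan_sum:
  assumes "\<And>j. j \<in> J \<Longrightarrow> inspan n us d (v j)"
  shows "inspan n us d (\<lambda>i. \<Sum>j\<in>J. a j * v j i)"
  unfolding inspan_def
proof safe
  fix i assume i: "i < n"
  have "(\<Sum>j\<in>J. a j * v j i) = (\<Sum>j\<in>J. a j * (\<Sum>k<d. ip n (v j) (us k) * us k i))"
    using assms i unfolding inspan_def by (intro sum.cong) auto
  also have "\<dots> = (\<Sum>k<d. (\<Sum>j\<in>J. a j * ip n (v j) (us k)) * us k i)"
    by (simp add: sum_distrib_left sum_distrib_right sum.swap[of _ J] algebra_simps)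
  also have "\<dots> = (\<Sum>k<d. ip n (\<lambda>i. \<Sum>j\<in>J. a j * v j i) (us k) * us k i)"
    by (simp add: ip_sum_left)
  finally show "(\<Sum>j\<in>J. a j * v j i) = (\<Sum>k<d. ip n (\<lambda>i. \<Sum>j\<in>J. a j * v j i) (us k) * us k i)" .
qed

lemma gram_schmidt:
  "\<exists>us d. orthonormal n us d \<and> d \<le> length bs \<and> (\<forall>b\<in>set bs. inspan n us d b)"
proof (induction bs)
  case Nil
  show ?case by (rule exI[of _ "\<lambda>_ _. 0"], rule exI[of _ 0]) (auto simp: orthonormal_def)
next
  case (Cons b bs)
  then obtain us d where on: "orthonormal n us d" and dl: "d \<le> length bs"
    and sp: "\<forall>b\<in>set bs. inspan n us d b" by blast
  define r where "r = (\<lambda>i. b i - (\<Sum>k<d. ip n b (us k) * us k i))"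
  have r_orth: "ip n (us l) r = 0" if "l < d" for l
  proof -
    have "ip n (us l) r = ip n r (us l)" by (rule ip_sym)
    also have "\<dots> = ip n b (us l) - (\<Sum>k<d. ip n b (us k) * ip n (us k) (us l))"
      unfolding r_def by (simp add: ip_diff_left ip_sum_left)
    also have "(\<Sum>k<d. ip n b (us k) * ip n (us k) (us l)) = (\<Sum>k<d. if k = l then ip n b (us l) else 0)"
      using on that unfolding orthonormal_def by (intro sum.cong) auto
    also have "\<dots> = ip n b (us l)" using that by simp
    finally show ?thesis by simp
  qed
  have ipbr: "ip n b r = ip n r r"
  proof -
    have e1: "ip n r r = ip n b r - ip n (\<lambda>i. \<Sum>k<d. ip n b (us k) * us k i) r"
      unfolding r_def by (rule ip_diff_left)
    have e2: "ip n (\<lambda>i. \<Sum>k<d. ip n b (us k) * us k i) r = (\<Sum>k<d. ip n b (us k) * ip n (us k) r)"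
      by (rule ip_sum_left)
    have e3: "(\<Sum>k<d. ip n b (us k) * ip n (us k) r) = 0" using r_orth by simp
    show ?thesis using e1 e2 e3 by linarith
  qed
  show ?case
  proof (cases "ip n r r = 0")
    case True
    have "\<forall>i\<in>{..<n}. (r i)^2 = 0"
      using True unfolding ip_def by (subst sum_nonneg_eq_0_iff[symmetric]) (auto simp: power2_eq_square)
    then have "inspan n us d b" unfolding inspan_def r_def by auto
    then show ?thesis using on dl sp by (intro exI[of _ us] exI[of _ d]) auto
  next
    case False
    have "ip n r r \<ge> 0" unfolding ip_def by (intro sum_nonneg) simp
    then have rr: "ip n r r > 0" using False by simp
    define nr where "nr = sqrt (ip n r r)"
    have nr: "nr > 0" "nr * nr = ip n r r" using rr by (auto simp: nr_def)
    define u where "u = (\<lambda>i. r i / nr)"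
    define us' where "us' = us(d := u)"
    have ku': "ip n u (us l) = 0" if "l < d" for l
    proof -
      have "ip n u (us l) = ip n r (us l) / nr" unfolding u_def by (rule ip_scale_left)
      also have "ip n r (us l) = ip n (us l) r" by (rule ip_sym)
      finally show ?thesis using r_orth[OF that] by simp
    qed
    have ku: "ip n (us l) u = 0" if "l < d" for l
      using ku'[OF that] ip_sym[of n "us l" u] by simp
    have uu: "ip n u u = 1"
    proof -
      have "ip n u u = ip n r u / nr" unfolding u_def by (rule ip_scale_left)
      also have "ip n r u = ip n u r" by (rule ip_sym)
      also have "ip n u r = ip n r r / nr" unfolding u_def by (rule ip_scale_left)
      finally show ?thesis using nr rr by simp
    qed
    have on': "orthonormal n us' (Suc d)"
      unfolding orthonormal_def
    proof (intro allI impI)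
      fix k l assume k: "k < Suc d" and l: "l < Suc d"
      show "ip n (us' k) (us' l) = (if k = l then 1 else 0)"
        using on k l ku uu unfolding orthonormal_def us'_def
        by (cases "k = d"; cases "l = d") (auto simp: ku ku')
    qed
    have old: "inspan n us' (Suc d) w" if "inspan n us d w" for w
    proof -
      have "ip n w u = (\<Sum>k<d. ip n w (us k) * ip n (us k) u)" by (rule inspan_ip[OF that])
      also have "\<dots> = 0" using ku by simp
      finally have w0: "ip n w u = 0" .
      show ?thesis unfolding inspan_def
      proof safe
        fix i assume "i < n"
        have "(\<Sum>k<Suc d. ip n w (us' k) * us' k i) = (\<Sum>k<d. ip n w (us k) * us k i)"
          by (simp add: us'_def w0)
        then show "w i = (\<Sum>k<Suc d. ip n w (us' k) * us' k i)"
          using that \<open>i < n\<close> unfolding inspan_def by simp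
      qed
    qed
    have bu: "ip n b u = nr"
    proof -
      have "ip n b u = ip n u b" by (rule ip_sym)
      also have "\<dots> = ip n r b / nr" unfolding u_def by (rule ip_scale_left)
      also have "ip n r b = ip n b r" by (rule ip_sym)
      also have "\<dots> = nr * nr" using ipbr nr by simp
      finally have "ip n b u = nr * nr / nr" .
      then show ?thesis using nr(1) by simp
    qed
    have new: "inspan n us' (Suc d) b"
      unfolding inspan_def
    proof safe
      fix i assume "i < n"
      have "(\<Sum>k<Suc d. ip n b (us' k) * us' k i) = (\<Sum>k<d. ip n b (us k) * us k i) + nr * u i"
        by (simp add: us'_def bu)
      also have "nr * u i = r i" using nr by (simp add: u_def)
      finally show "b i = (\<Sum>k<Suc d. ip n b (us' k) * us' k i)" by (simp add: r_def)
    qed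
    show ?thesis using on' dl sp old new
      by (intro exI[of _ us'] exI[of _ "Suc d"]) auto
  qed
qed


lemma offs_le_Pcat:
  assumes "j \<in> {1..q}"
  shows "offs pj j + pj j \<le> Pcat q pj"
proof -
  have "offs pj j + pj j = (\<Sum>i\<in>{1..j}. pj i)"
  proof -
    have "{1..j} = insert j {1..<j}" using assms by auto
    then show ?thesis unfolding offs_def by simp
  qed
  also have "\<dots> \<le> (\<Sum>i\<in>{1..q}. pj i)" using assms by (intro sum_mono2) auto
  finally show ?thesis unfolding Pcat_def .
qed

lemma offs_mono:
  assumes "j \<in> {1..q}" "j' \<in> {1..q}" "j < j'"
  shows "offs pj j + pj j \<le> offs pj j'"
proof -
  have "offs pj j + pj j = (\<Sum>i\<in>{1..j}. pj i)"
  proof -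
    have "{1..j} = insert j {1..<j}" using assms by auto
    then show ?thesis unfolding offs_def by simp
  qed
  also have "\<dots> \<le> (\<Sum>i\<in>{1..<j'}. pj i)" using assms by (intro sum_mono2) auto
  finally show ?thesis unfolding offs_def .
qed

lemma Iset_disj:
  assumes "j \<in> {1..q}" "j' \<in> {1..q}" "c \<in> Iset pj j" "c \<in> Iset pj j'"
  shows "j = j'"
proof (rule ccontr)
  assume "j \<noteq> j'"
  then consider "j < j'" | "j' < j" by linarith
  then show False
  proof cases
    case 1 then show False using offs_mono[OF assms(1,2) 1, of pj] assms(3,4) unfolding Iset_def by auto
  next
    case 2 then show False using offs_mono[OF assms(2,1) 2, of pj] assms(3,4) unfolding Iset_def by auto
  qed
qed

lemma Iset_sub:
  assumes "j \<in> {1..q}"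
  shows "Iset pj j \<subseteq> {..<ptot q pj N}"
  using offs_le_Pcat[OF assms, of pj] unfolding Iset_def ptot_def by auto

lemma design_in:
  assumes j: "j \<in> {1..q}" and c: "c \<in> Iset pj j"
  shows "design q pj N Cv W i c = (if Cv i j = c - offs pj j + 1 then 1 else 0)"
proof -
  have cP: "c < Pcat q pj" using offs_le_Pcat[OF j, of pj] c unfolding Iset_def by auto
  have eq: "(if c \<in> Iset pj j' \<and> Cv i j' = c - offs pj j' + 1 then 1 else 0)
      = (if j' = j then (if Cv i j = c - offs pj j + 1 then 1 else 0) else (0::real))"
    if j': "j' \<in> {1..q}" for j'
  proof (cases "j' = j")
    case True then show ?thesis using c by simp
  next
    case False
    then have "c \<notin> Iset pj j'" using Iset_disj[OF j j' c] by blast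
    then show ?thesis using False by simp
  qed
  have "(\<Sum>j'\<in>{1..q}. if c \<in> Iset pj j' \<and> Cv i j' = c - offs pj j' + 1 then 1 else 0)
      = (\<Sum>j'\<in>{1..q}. if j' = j then (if Cv i j = c - offs pj j + 1 then 1 else 0) else (0::real))"
    by (rule sum.cong[OF refl eq])
  also have "\<dots> = (if Cv i j = c - offs pj j + 1 then 1 else 0)" using sum.delta[OF finite_atLeastAtMost[of "1::nat" q], of j "\<lambda>_. if Cv i j = c - offs pj j + 1 then 1 else (0::real)"] j by simp
  finally have s: "(\<Sum>j'\<in>{1..q}. if c \<in> Iset pj j' \<and> Cv i j' = c - offs pj j' + 1 then 1 else 0)
      = (if Cv i j = c - offs pj j + 1 then 1 else (0::real))" .
  have "\<not> (Pcat q pj \<le> c \<and> c < ptot q pj N)" using cP by simp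
  then show ?thesis unfolding design_def s by (simp only: if_False)
qed

lemma row_sum:
  assumes j: "j \<in> {1..q}" and cv: "Cv i j \<in> {1..pj j}"
  shows "(\<Sum>c\<in>Iset pj j. design q pj N Cv W i c) = 1"
proof -
  let ?o = "offs pj j"
  have eq: "design q pj N Cv W i c = (if c = ?o + Cv i j - 1 then 1 else 0)" if c: "c \<in> Iset pj j" for c
  proof -
    have co: "c \<ge> ?o" using c by (simp add: Iset_def)
    have c1: "Cv i j \<ge> 1" using cv by simp
    have "(Cv i j = c - ?o + 1) = (c = ?o + Cv i j - 1)" using co c1 by linarith
    then show ?thesis using design_in[OF j c] by simp
  qed
  have mem: "?o + Cv i j - 1 \<in> Iset pj j" using cv unfolding Iset_def by auto
  have "(\<Sum>c\<in>Iset pj j. design q pj N Cv W i c) = (\<Sum>c\<in>Iset pj j. if c = ?o + Cv i j - 1 then 1 else 0)"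
    by (rule sum.cong[OF refl eq])
  also have "\<dots> = 1" using mem by (simp add: Iset_def)
  finally show ?thesis .
qed

lemma Xb_shift:
  assumes j: "j \<in> {1..q}" and cv: "Cv i j \<in> {1..pj j}"
  shows "Xb q pj N Cv W (\<lambda>k. if k \<in> Iset pj j then \<beta> k - t else \<beta> k) i = Xb q pj N Cv W \<beta> i - t"
proof -
  let ?p = "ptot q pj N"
  let ?d = "design q pj N Cv W i"
  have "Xb q pj N Cv W (\<lambda>k. if k \<in> Iset pj j then \<beta> k - t else \<beta> k) i
      = (\<Sum>c<?p. ?d c * \<beta> c) - t * (\<Sum>c<?p. if c \<in> Iset pj j then ?d c else 0)"
  proof -
    have "\<And>c. ?d c * (if c \<in> Iset pj j then \<beta> c - t else \<beta> c) = ?d c * \<beta> c - t * (if c \<in> Iset pj j then ?d c else 0)"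
      by (simp add: algebra_simps)
    then show ?thesis unfolding Xb_def by (simp only: sum_subtractf sum_distrib_left)
  qed
  also have "(\<Sum>c<?p. if c \<in> Iset pj j then ?d c else 0) = (\<Sum>c\<in>Iset pj j. ?d c)"
  proof -
    have e: "{..<?p} \<inter> Iset pj j = Iset pj j" "Iset pj j \<inter> {..<?p} = Iset pj j"
      using Iset_sub[OF j, of pj N] by auto
    show ?thesis by (simp add: sum.If_cases e)
  qed
  also have "\<dots> = 1" using row_sum[of j q Cv i pj N W] j cv by simp
  finally show ?thesis unfolding Xb_def by simp
qed


lemma group_zero:
  assumes lam0: "lam0 > 0" and j: "j \<in> {1..q}" and pj: "pj j \<ge> 1"
    and cv: "\<forall>i<n. Cv i j \<in> {1..pj j}"
    and min: "\<forall>\<alpha> \<beta>. objective n q pj N Cv W lam lam0 y \<alpha>h \<beta>h \<le> objective n q pj N Cv W lam lam0 y \<alpha> \<beta>"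
  shows "0 \<in> \<beta>h ` Iset pj j"
proof (rule ccontr)
  assume nz: "0 \<notin> \<beta>h ` Iset pj j"
  let ?p = "ptot q pj N"
  define k0 where "k0 = offs pj j"
  have k0: "k0 \<in> Iset pj j" using pj unfolding k0_def Iset_def by auto
  define t where "t = \<beta>h k0"
  have t: "t \<noteq> 0" using nz k0 unfolding t_def by force
  define \<beta>' where "\<beta>' = (\<lambda>k. if k \<in> Iset pj j then \<beta>h k - t else \<beta>h k)"
  define \<alpha>' where "\<alpha>' = \<alpha>h + t"
  have sq: "sqnorm n (\<lambda>i. y i - \<alpha>' - Xb q pj N Cv W \<beta>' i) = sqnorm n (\<lambda>i. y i - \<alpha>h - Xb q pj N Cv W \<beta>h i)"
    unfolding sqnorm_def
  proof (intro sum.cong refl)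
    fix i assume "i \<in> {..<n}"
    then have "Xb q pj N Cv W \<beta>' i = Xb q pj N Cv W \<beta>h i - t"
      unfolding \<beta>'_def using Xb_shift[OF j] cv by auto
    then show "(y i - \<alpha>' - Xb q pj N Cv W \<beta>' i)\<^sup>2 = (y i - \<alpha>h - Xb q pj N Cv W \<beta>h i)\<^sup>2"
      unfolding \<alpha>'_def by (simp add: algebra_simps)
  qed
  let ?S = "{k\<in>{..<?p}. \<beta>h k \<noteq> 0}"
  let ?S' = "{k\<in>{..<?p}. \<beta>' k \<noteq> 0}"
  have k0S: "k0 \<in> ?S" using k0 Iset_sub[OF j, of pj N] t unfolding t_def by auto
  have "?S' \<subseteq> ?S - {k0}"
  proof
    fix k assume k: "k \<in> ?S'"
    show "k \<in> ?S - {k0}"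
    proof (cases "k \<in> Iset pj j")
      case True
      then have "\<beta>h k \<noteq> 0" using nz by force
      moreover have "k \<noteq> k0" using k True unfolding \<beta>'_def t_def by auto
      ultimately show ?thesis using k by auto
    next
      case False then show ?thesis using k k0 unfolding \<beta>'_def by auto
    qed
  qed
  then have "card ?S' \<le> card (?S - {k0})" by (intro card_mono) auto
  also have "\<dots> < card ?S" using k0S by (intro card_Diff1_less) auto
  finally have l0lt: "l0 ?p \<beta>' < l0 ?p \<beta>h" unfolding l0_def .
  have nv: "nvals q pj \<beta>' = nvals q pj \<beta>h"
    unfolding nvals_def
  proof (intro sum.cong refl)
    fix j' assume j': "j' \<in> {1..q}"
    show "card (\<beta>' ` Iset pj j') = card (\<beta>h ` Iset pj j')"
    proof (cases "j' = j")
      case True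
      have "\<beta>' ` Iset pj j = (\<lambda>x. x - t) ` (\<beta>h ` Iset pj j)"
        unfolding \<beta>'_def image_image by (intro image_cong) auto
      moreover have "inj (\<lambda>x::real. x - t)" by (intro injI) auto
      ultimately show ?thesis using True by (simp add: card_image inj_on_subset)
    next
      case False
      have "\<beta>' ` Iset pj j' = \<beta>h ` Iset pj j'"
        unfolding \<beta>'_def using Iset_disj[OF j j'] False by (intro image_cong) auto
      then show ?thesis by simp
    qed
  qed
  have "objective n q pj N Cv W lam lam0 y \<alpha>' \<beta>' < objective n q pj N Cv W lam lam0 y \<alpha>h \<beta>h"
    unfolding objective_def sq nv using l0lt lam0 by simp
  then show False using min by (meson not_le)
qed

lemma card_le_Diff0: "finite A \<Longrightarrow> card A \<le> card (A - {0::real}) + 1"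
proof (cases "0 \<in> A")
  case True
  assume f: "finite A"
  have "card A = Suc (card (A - {0}))" using card.remove[OF f True] .
  then show ?thesis by simp
next
  case False
  then show ?thesis by simp
qed

lemma nvals_le: "nvals q pj \<beta> \<le> Kfun q pj \<beta> + q"
proof -
  have "nvals q pj \<beta> \<le> (\<Sum>j\<in>{1..q}. card (\<beta> ` Iset pj j - {0}) + 1)"
    unfolding nvals_def by (intro sum_mono card_le_Diff0) (simp add: Iset_def)
  also have "\<dots> = Kfun q pj \<beta> + q" unfolding Kfun_def sum.distrib by simp
  finally show ?thesis .
qed

lemma nvals_eq:
  assumes "\<And>j. j \<in> {1..q} \<Longrightarrow> 0 \<in> \<beta> ` Iset pj j"
  shows "nvals q pj \<beta> = Kfun q pj \<beta> + q"
proof -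
  have "nvals q pj \<beta> = (\<Sum>j\<in>{1..q}. card (\<beta> ` Iset pj j - {0}) + 1)"
    unfolding nvals_def
  proof (intro sum.cong refl)
    fix j assume j: "j \<in> {1..q}"
    have f: "finite (\<beta> ` Iset pj j)" by (simp add: Iset_def)
    show "card (\<beta> ` Iset pj j) = card (\<beta> ` Iset pj j - {0}) + 1"
      using card.remove[OF f assms[OF j]] by simp
  qed
  also have "\<dots> = Kfun q pj \<beta> + q" unfolding Kfun_def sum.distrib by simp
  finally show ?thesis .
qed


lemma sum_Pow_pow:
  assumes "finite S"
  shows "(\<Sum>T\<in>Pow S. (a::real) ^ card T) = (1 + a) ^ card S"
  using assms
proof (induction S rule: finite_induct)
  case empty
  then show ?case by simp
next
  case (insert x S)
  have disj: "Pow S \<inter> insert x ` Pow S = {}" using insert by auto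
  have inj: "inj_on (insert x) (Pow S)"
    using insert unfolding inj_on_def by (metis PowD insert_ident subsetD)
  have fin: "finite (Pow S)" "finite (insert x ` Pow S)" using insert by auto
  have "(\<Sum>T\<in>Pow (insert x S). a ^ card T) = (\<Sum>T\<in>Pow S. a ^ card T) + (\<Sum>T\<in>insert x ` Pow S. a ^ card T)"
    unfolding Pow_insert by (rule sum.union_disjoint[OF fin disj])
  also have "(\<Sum>T\<in>insert x ` Pow S. a ^ card T) = (\<Sum>T\<in>Pow S. a ^ card (insert x T))"
    by (rule sum.reindex[OF inj, unfolded comp_def])
  also have "\<dots> = (\<Sum>T\<in>Pow S. a * a ^ card T)"
  proof (intro sum.cong refl)
    fix T assume "T \<in> Pow S"
    then have "finite T" "x \<notin> T" using insert finite_subset by auto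
    then show "a ^ card (insert x T) = a * a ^ card T" by simp
  qed
  also have "\<dots> = a * (1 + a) ^ card S" by (simp add: sum_distrib_left[symmetric] insert.IH)
  finally show ?case using insert by (simp add: algebra_simps)
qed

lemma final_numeric:
  fixes x :: real and p :: nat
  assumes x: "x = exp 1 * real p" and p: "p \<ge> 1"
  shows "2 * x powr (-10) * (1 + 2 * x powr (-10)) ^ p \<le> 4 * x powr (-9)"
proof -
  define b where "b = x powr (-10)"
  have x1: "x \<ge> exp 1" using p x by simp
  have xpos: "x > 0" using x1 by (meson exp_gt_zero less_le_trans)
  have xge1: "x \<ge> 1" using x1 exp_ge_add_one_self[of 1] by linarith
  have b0: "b \<ge> 0" unfolding b_def by simp
  have bx: "b * x = x powr (-9)"
  proof -
    have "x * x powr (-10) = x powr (1 + (-10))" by (rule powr_mult_base) (use xpos in simp)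
    then show ?thesis unfolding b_def by (simp add: mult.commute)
  qed
  have "1 \<le> x powr 9" using xge1 by (intro ge_one_powr_ge_zero) auto
  then have "x powr (-9) \<le> 1" by (simp add: powr_minus inverse_le_1_iff)
  then have "b * x \<le> 1" using bx by simp
  then have "b * (exp 1 * real p) \<le> 1" using x by simp
  then have "b * real p \<le> 1 / exp 1" by (simp add: field_simps)
  also have "\<dots> \<le> 1 / 2" using exp_ge_add_one_self[of 1] by (simp add: field_simps)
  finally have bp: "2 * b * real p \<le> 1" by simp
  have "(1 + 2 * b) ^ p \<le> exp (2 * b) ^ p"
    using b0 by (intro power_mono) (auto simp: add.commute)
  also have "\<dots> = exp (real p * (2 * b))" by (simp add: exp_of_nat_mult)
  also have "\<dots> \<le> exp 1" using bp by (simp add: algebra_simps)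
  also have "\<dots> \<le> 2 * x" using x1 by (smt (verit) exp_gt_zero)
  finally have "(1 + 2 * b) ^ p \<le> 2 * x" .
  then have "2 * b * (1 + 2 * b) ^ p \<le> 2 * b * (2 * x)" using b0 by (intro mult_left_mono) auto
  also have "\<dots> = 4 * x powr (-9)" using bx by simp
  finally show ?thesis unfolding b_def .
qed

lemma prob_part:
  fixes us :: "nat set \<Rightarrow> nat \<Rightarrow> nat \<Rightarrow> real" and d :: "nat set \<Rightarrow> nat"
  assumes s: "\<sigma> > 0" and p: "p \<ge> 1"
    and on: "\<And>T. T \<subseteq> {..<p} \<Longrightarrow> orthonormal n (us T) (d T)"
    and dle: "\<And>T. T \<subseteq> {..<p} \<Longrightarrow> d T \<le> card T + 1"
    and L: "L = ln (exp 1 * real p)"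
    and Bad: "\<And>T. Bad T = {\<epsilon>\<in>space (noise_space n \<sigma>). 40*\<sigma>^2*(real (card T)+1)*L < (\<Sum>k<d T. (ip n (us T k) \<epsilon>)^2)}"
  shows "space (noise_space n \<sigma>) - (\<Union>T\<in>Pow {..<p}. Bad T) \<in> sets (noise_space n \<sigma>)"
    and "measure (noise_space n \<sigma>) (space (noise_space n \<sigma>) - (\<Union>T\<in>Pow {..<p}. Bad T))
          \<ge> 1 - 4 * (exp 1 * real p) powr (-9)"
proof -
  interpret N: prob_space "noise_space n \<sigma>" using prob_space_noise s by auto
  define x where "x = exp 1 * real p"
  have xpos: "x > 0" using p unfolding x_def by simp
  define b where "b = x powr (-10)"
  have b0: "b \<ge> 0" unfolding b_def by simp
  have Bm: "Bad T \<in> sets (noise_space n \<sigma>)" for T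
  proof -
    have [measurable]: "(\<lambda>\<epsilon>. \<Sum>k<d T. (ip n (us T k) \<epsilon>)^2) \<in> borel_measurable (noise_space n \<sigma>)"
      unfolding ip_def noise_space_def by measurable
    show ?thesis unfolding Bad by measurable
  qed
  have Um: "(\<Union>T\<in>Pow {..<p}. Bad T) \<in> sets (noise_space n \<sigma>)" using Bm by auto
  show "space (noise_space n \<sigma>) - (\<Union>T\<in>Pow {..<p}. Bad T) \<in> sets (noise_space n \<sigma>)"
    using Um by auto
  have each: "measure (noise_space n \<sigma>) (Bad T) \<le> (2 * b) ^ (card T + 1)" if T: "T \<subseteq> {..<p}" for T
  proof -
    let ?c = "card T + 1"
    have "measure (noise_space n \<sigma>) (Bad T) \<le> sqrt 2 ^ d T * exp (- (40*\<sigma>^2*(real (card T)+1)*L) / (4*\<sigma>^2))"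
      unfolding Bad by (rule tail_bound[OF s on[OF T]])
    also have "- (40*\<sigma>^2*(real (card T)+1)*L) / (4*\<sigma>^2) = real ?c * (-10 * ln x)"
      using s by (simp add: L x_def field_simps)
    also have "exp (real ?c * (-10 * ln x)) = b ^ ?c"
      unfolding exp_of_nat_mult b_def using xpos by (simp add: powr_def)
    finally have t: "measure (noise_space n \<sigma>) (Bad T) \<le> sqrt 2 ^ d T * b ^ ?c" .
    have "sqrt 2 ^ d T \<le> sqrt 2 ^ ?c"
      using dle[OF T] by (intro power_increasing) auto
    also have "\<dots> \<le> 2 ^ ?c"
    proof -
      have "sqrt 2 \<le> sqrt (2^2)" by (subst real_sqrt_le_iff) simp
      then have "sqrt 2 \<le> 2" by simp
      then show ?thesis by (intro power_mono) auto
    qed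
    finally have "sqrt 2 ^ d T * b ^ ?c \<le> 2 ^ ?c * b ^ ?c"
      using b0 by (intro mult_right_mono) auto
    then have "measure (noise_space n \<sigma>) (Bad T) \<le> 2 ^ ?c * b ^ ?c" using t by linarith
    then show ?thesis by (simp only: power_mult_distrib)
  qed
  have "measure (noise_space n \<sigma>) (\<Union>T\<in>Pow {..<p}. Bad T) \<le> (\<Sum>T\<in>Pow {..<p}. measure (noise_space n \<sigma>) (Bad T))"
    by (rule measure_UNION_le) (auto simp: Bm)
  also have "\<dots> \<le> (\<Sum>T\<in>Pow {..<p}. (2 * b) ^ (card T + 1))"
    by (intro sum_mono each) auto
  also have "\<dots> = 2 * b * (\<Sum>T\<in>Pow {..<p}. (2 * b) ^ card T)"
    by (simp add: sum_distrib_left)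
  also have "\<dots> = 2 * b * (1 + 2 * b) ^ p"
    by (subst sum_Pow_pow) auto
  also have "\<dots> \<le> 4 * x powr (-9)"
    unfolding b_def by (rule final_numeric[OF x_def p])
  finally have "measure (noise_space n \<sigma>) (\<Union>T\<in>Pow {..<p}. Bad T) \<le> 4 * x powr (-9)" .
  then show "measure (noise_space n \<sigma>) (space (noise_space n \<sigma>) - (\<Union>T\<in>Pow {..<p}. Bad T))
          \<ge> 1 - 4 * (exp 1 * real p) powr (-9)"
    using N.prob_compl[OF Um] unfolding x_def by simp
qed


lemma inspan_cong:
  assumes "inspan n us d w" "\<And>i. i < n \<Longrightarrow> w i = w' i"
  shows "inspan n us d w'"
proof -
  have "ip n w (us k) = ip n w' (us k)" for k using assms(2) by (intro ip_cong) auto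
  then show ?thesis using assms unfolding inspan_def by auto
qed

lemma inspan_add:
  assumes "inspan n us d w1" "inspan n us d w2"
  shows "inspan n us d (\<lambda>i. a * w1 i + w2 i)"
proof -
  have "inspan n us d (\<lambda>i. \<Sum>j\<in>{0::nat,1}. (if j = 0 then a else 1) * (if j = 0 then w1 else w2) i)"
    by (rule inspan_sum) (use assms in auto)
  then show ?thesis by simp
qed

lemma sqnorm_expand:
  "sqnorm n (\<lambda>i. f i + e i - a - X i) = sqnorm n (\<lambda>i. f i - X i - a) + 2 * ip n e (\<lambda>i. f i - X i - a) + ip n e e"
proof -
  have "(f i + e i - a - X i)^2 = (f i - X i - a)^2 + 2 * (e i * (f i - X i - a)) + e i * e i" for i
    by (simp add: power2_eq_square algebra_simps)
  then show ?thesis unfolding sqnorm_def ip_def by (simp add: sum.distrib sum_distrib_left)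
qed

lemma sqnorm_ip: "sqnorm n w = ip n w w"
  unfolding sqnorm_def ip_def by (simp add: power2_eq_square)

lemma ip_nonneg: "ip n w w \<ge> 0"
  unfolding ip_def by (intro sum_nonneg) auto

lemma cross_bound:
  assumes "inspan n us d v"
  shows "2 * ip n e v \<le> ip n v v / 4 + 4 * (\<Sum>k<d. (ip n (us k) e)^2)"
proof -
  have ev: "ip n e v = (\<Sum>k<d. ip n v (us k) * ip n (us k) e)"
    using inspan_ip[OF assms, of e] ip_sym[of n e v] by simp
  have vv: "ip n v v = (\<Sum>k<d. (ip n v (us k))^2)"
    using inspan_ip[OF assms, of v] by (simp add: ip_sym[of n "us _" v] power2_eq_square)
  have "2 * ip n e v = (\<Sum>k<d. 2 * (ip n v (us k) * ip n (us k) e))"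
    by (simp add: ev sum_distrib_left)
  also have "\<dots> \<le> (\<Sum>k<d. (ip n v (us k))^2 / 4 + 4 * (ip n (us k) e)^2)"
  proof (intro sum_mono)
    fix k
    have "0 \<le> (ip n v (us k) / 2 - 2 * ip n (us k) e)^2" by simp
    then show "2 * (ip n v (us k) * ip n (us k) e) \<le> (ip n v (us k))^2 / 4 + 4 * (ip n (us k) e)^2"
      by (simp add: power2_eq_square algebra_simps)
  qed
  also have "\<dots> = ip n v v / 4 + 4 * (\<Sum>k<d. (ip n (us k) e)^2)"
    by (simp add: vv sum.distrib sum_divide_distrib sum_distrib_left)
  finally show ?thesis .
qed


lemma det_part:
  fixes us :: "nat set \<Rightarrow> nat \<Rightarrow> nat \<Rightarrow> real" and d :: "nat set \<Rightarrow> nat"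
  assumes n: "n \<ge> 1" and pjpos: "\<forall>j\<in>{1..q}. pj j \<ge> 1"
    and cv: "\<forall>i<n. \<forall>j\<in>{1..q}. Cv i j \<in> {1..pj j}"
    and lam: "lam \<ge> 0" and s0: "s \<ge> 0"
    and lam0: "real n * lam0 \<ge> 320 * s" and lam0pos: "lam0 > 0"
    and sp1: "\<And>T. T \<subseteq> {..<ptot q pj N} \<Longrightarrow> inspan n (us T) (d T) (\<lambda>i. 1)"
    and sp2: "\<And>T c. T \<subseteq> {..<ptot q pj N} \<Longrightarrow> c \<in> T \<Longrightarrow> inspan n (us T) (d T) (\<lambda>i. design q pj N Cv W i c)"
    and good: "\<And>T. T \<subseteq> {..<ptot q pj N} \<Longrightarrow> (\<Sum>k<d T. (ip n (us T k) \<epsilon>)^2) \<le> 40 * s * (real (card T) + 1)"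
    and min: "\<forall>\<alpha> \<beta>. objective n q pj N Cv W lam lam0 (\<lambda>i. f i + \<epsilon> i) \<alpha>h \<beta>h
                     \<le> objective n q pj N Cv W lam lam0 (\<lambda>i. f i + \<epsilon> i) \<alpha> \<beta>"
  shows "sqnorm n (\<lambda>i. f i - Xb q pj N Cv W \<beta>h i - \<alpha>h) / real n + lam * real (Kfun q pj \<beta>h)
     \<le> 320 * (risk n q pj N Cv W lam lam0 f \<alpha> \<beta> + s / real n)"
proof -
  let ?p = "ptot q pj N"
  let ?X = "Xb q pj N Cv W"
  define rh where "rh = (\<lambda>i. f i - ?X \<beta>h i - \<alpha>h)"
  define r where "r = (\<lambda>i. f i - ?X \<beta> i - \<alpha>)"
  define Rh where "Rh = sqnorm n rh"
  define R where "R = sqnorm n r"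
  define l0h where "l0h = real (l0 ?p \<beta>h)"
  define l0c where "l0c = real (l0 ?p \<beta>)"
  define Kh where "Kh = real (Kfun q pj \<beta>h)"
  define Kc where "Kc = real (Kfun q pj \<beta>)"
  define nvh where "nvh = real (nvals q pj \<beta>h)"
  define nvc where "nvc = real (nvals q pj \<beta>)"
  have npos: "real n > 0" using n by simp
  have Rh0: "Rh \<ge> 0" "R \<ge> 0" unfolding Rh_def R_def sqnorm_ip by (auto intro: ip_nonneg)
  have K0: "Kh \<ge> 0" "Kc \<ge> 0" "l0h \<ge> 0" "l0c \<ge> 0" unfolding Kh_def Kc_def l0h_def l0c_def by auto
  \<comment> \<open>the groups of the minimiser contain zero\<close>
  have nvh: "nvh = Kh + real q"
  proof -
    have "nvals q pj \<beta>h = Kfun q pj \<beta>h + q"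
    proof (rule nvals_eq)
      fix j assume j: "j \<in> {1..q}"
      show "0 \<in> \<beta>h ` Iset pj j"
        by (rule group_zero[OF lam0pos j]) (use pjpos cv j min in auto)
    qed
    then show ?thesis unfolding nvh_def Kh_def by simp
  qed
  have nvc: "nvc \<le> Kc + real q" unfolding nvc_def Kc_def using nvals_le[of q pj \<beta>] by linarith
  have objh: "objective n q pj N Cv W lam lam0 (\<lambda>i. f i + \<epsilon> i) \<alpha>h \<beta>h
      = (Rh + 2 * ip n \<epsilon> rh + ip n \<epsilon> \<epsilon>) / real n + lam0 * l0h + lam * nvh"
    unfolding objective_def Rh_def rh_def l0h_def nvh_def sqnorm_expand ..
  have objc: "objective n q pj N Cv W lam lam0 (\<lambda>i. f i + \<epsilon> i) \<alpha> \<beta>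
      = (R + 2 * ip n \<epsilon> r + ip n \<epsilon> \<epsilon>) / real n + lam0 * l0c + lam * nvc"
    unfolding objective_def R_def r_def l0c_def nvc_def sqnorm_expand ..
  have "(Rh + 2 * ip n \<epsilon> rh + ip n \<epsilon> \<epsilon>) / real n + lam0 * l0h + lam * nvh
      \<le> (R + 2 * ip n \<epsilon> r + ip n \<epsilon> \<epsilon>) / real n + lam0 * l0c + lam * nvc"
    using min objh objc by metis
  then have H: "real n * ((Rh + 2 * ip n \<epsilon> rh + ip n \<epsilon> \<epsilon>) / real n + lam0 * l0h + lam * nvh)
      \<le> real n * ((R + 2 * ip n \<epsilon> r + ip n \<epsilon> \<epsilon>) / real n + lam0 * l0c + lam * nvc)"
    using npos by (intro mult_left_mono) auto
  have e1: "real n * ((Rh + 2 * ip n \<epsilon> rh + ip n \<epsilon> \<epsilon>) / real n + lam0 * l0h + lam * nvh)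
     = Rh + 2 * ip n \<epsilon> rh + ip n \<epsilon> \<epsilon> + real n * lam0 * l0h + real n * lam * nvh"
    using npos by (simp add: field_simps)
  have e2: "real n * ((R + 2 * ip n \<epsilon> r + ip n \<epsilon> \<epsilon>) / real n + lam0 * l0c + lam * nvc)
     = R + 2 * ip n \<epsilon> r + ip n \<epsilon> \<epsilon> + real n * lam0 * l0c + real n * lam * nvc"
    using npos by (simp add: field_simps)
  have basic: "Rh + 2 * ip n \<epsilon> rh + real n * lam0 * l0h + real n * lam * nvh
      \<le> R + 2 * ip n \<epsilon> r + real n * lam0 * l0c + real n * lam * nvc"
    using H unfolding e1 e2 by linarith
  define T where "T = {c\<in>{..<?p}. \<beta>h c \<noteq> 0 \<or> \<beta> c \<noteq> 0}"
  have Tsub: "T \<subseteq> {..<?p}" unfolding T_def by auto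
  define v where "v = (\<lambda>i. (\<alpha>h - \<alpha>) * 1 + (\<Sum>c\<in>T. (\<beta>h c - \<beta> c) * design q pj N Cv W i c))"
  have vr: "v i = r i - rh i" for i
  proof -
    have "?X \<beta>h i - ?X \<beta> i = (\<Sum>c<?p. (\<beta>h c - \<beta> c) * design q pj N Cv W i c)"
      unfolding Xb_def by (simp add: sum_subtractf[symmetric] algebra_simps)
    also have "\<dots> = (\<Sum>c\<in>T. (\<beta>h c - \<beta> c) * design q pj N Cv W i c)"
      by (rule sum.mono_neutral_right) (auto simp: T_def)
    finally show ?thesis unfolding v_def r_def rh_def by simp
  qed
  have vspan: "inspan n (us T) (d T) v"
    unfolding v_def
    by (intro inspan_add inspan_sum sp1[OF Tsub] sp2[OF Tsub])
  have ev: "ip n \<epsilon> r - ip n \<epsilon> rh = ip n \<epsilon> v"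
  proof -
    have "ip n \<epsilon> v = ip n v \<epsilon>" by (rule ip_sym)
    also have "\<dots> = ip n (\<lambda>i. r i - rh i) \<epsilon>" using vr by (intro ip_cong) auto
    also have "\<dots> = ip n r \<epsilon> - ip n rh \<epsilon>" by (rule ip_diff_left)
    finally show ?thesis by (simp add: ip_sym)
  qed
  define Q where "Q = (\<Sum>k<d T. (ip n (us T k) \<epsilon>)^2)"
  have cross: "2 * ip n \<epsilon> v \<le> ip n v v / 4 + 4 * Q"
    unfolding Q_def by (rule cross_bound[OF vspan])
  have vv: "ip n v v \<le> 2 * Rh + 2 * R"
  proof -
    have "ip n v v = (\<Sum>i<n. (r i - rh i)^2)" unfolding ip_def vr by (simp add: power2_eq_square)
    also have "\<dots> \<le> (\<Sum>i<n. 2 * (rh i)^2 + 2 * (r i)^2)"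
    proof (intro sum_mono)
      fix i
      have "0 \<le> (r i + rh i)^2" by simp
      then show "(r i - rh i)^2 \<le> 2 * (rh i)^2 + 2 * (r i)^2" by (simp add: power2_eq_square algebra_simps)
    qed
    also have "\<dots> = 2 * Rh + 2 * R" unfolding Rh_def R_def sqnorm_def by (simp add: sum.distrib sum_distrib_left)
    finally show ?thesis .
  qed
  have Qb: "Q \<le> 40 * s * (real (card T) + 1)" unfolding Q_def by (rule good[OF Tsub])
  have cT: "real (card T) \<le> l0h + l0c"
  proof -
    have "T = {c\<in>{..<?p}. \<beta>h c \<noteq> 0} \<union> {c\<in>{..<?p}. \<beta> c \<noteq> 0}" unfolding T_def by auto
    then have "card T \<le> l0 ?p \<beta>h + l0 ?p \<beta>" unfolding l0_def by (metis card_Un_le)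
    then show ?thesis unfolding l0h_def l0c_def by linarith
  qed
  define A where "A = real n * lam0"
  have A: "A \<ge> 320 * s" unfolding A_def using lam0 .
  have m1: "160 * s * l0h \<le> A * l0h / 2" using mult_right_mono[OF A K0(3)] by simp
  have m2: "160 * s * l0c \<le> A * l0c / 2" using mult_right_mono[OF A K0(4)] by simp
  have Qb2: "4 * Q \<le> 160 * s * l0h + 160 * s * l0c + 160 * s"
  proof -
    have "4 * Q \<le> 160 * s * (real (card T) + 1)" using Qb by simp
    also have "\<dots> \<le> 160 * s * (l0h + l0c + 1)" using cT s0 by (intro mult_left_mono) auto
    finally show ?thesis by (simp add: algebra_simps)
  qed
  define B where "B = real n * lam"
  have B0: "B \<ge> 0" unfolding B_def using lam by simp
  have Bn: "B * nvh = B * Kh + B * real q" "B * nvc \<le> B * Kc + B * real q"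
  proof -
    show "B * nvh = B * Kh + B * real q" using nvh by (simp add: algebra_simps)
    have "B * nvc \<le> B * (Kc + real q)" using mult_left_mono[OF nvc B0] .
    then show "B * nvc \<le> B * Kc + B * real q" by (simp add: algebra_simps)
  qed
  have Al0: "A * l0h \<ge> 0" using A K0 s0 by simp
  have "Rh + 2 * B * Kh \<le> 3 * R + 3 * A * l0c + 2 * B * Kc + 320 * s"
    using basic ev cross vv Qb2 m1 m2 Bn Al0 unfolding A_def B_def by (simp add: algebra_simps)
  then have "(Rh + 2 * B * Kh) / real n \<le> (3 * R + 3 * A * l0c + 2 * B * Kc + 320 * s) / real n"
    using npos by (simp add: divide_right_mono)
  then have main: "Rh / real n + 2 * lam * Kh \<le> 3 * (R / real n) + 3 * lam0 * l0c + 2 * lam * Kc + 320 * (s / real n)"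
    using npos unfolding A_def B_def by (simp add: field_simps)
  have risk: "risk n q pj N Cv W lam lam0 f \<alpha> \<beta> = R / real n + lam0 * l0c + lam * Kc"
    unfolding risk_def R_def r_def l0c_def Kc_def ..
  have p1: "lam * Kh \<ge> 0" "lam0 * l0c \<ge> 0" "lam * Kc \<ge> 0" "R / real n \<ge> 0" "s / real n \<ge> 0"
    using lam K0 lam0pos Rh0 s0 npos by auto
  show ?thesis
    unfolding risk Rh_def[symmetric] rh_def[symmetric] Kh_def[symmetric]
  proof -
    have main': "Rh / real n + 2 * (lam * Kh) \<le> 3 * (R / real n) + 3 * (lam0 * l0c) + 2 * (lam * Kc) + 320 * (s / real n)"
      using main by (simp add: mult.assoc)
    show "Rh / real n + lam * Kh \<le> 320 * (R / real n + lam0 * l0c + lam * Kc + s / real n)"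
    proof -
      have gen: "x1 + x2 \<le> 320 * (x3 + x4 + x5 + x6)"
        if "x1 + 2 * x2 \<le> 3 * x3 + 3 * x4 + 2 * x5 + 320 * x6" "0 \<le> x2" "0 \<le> x3" "0 \<le> x4" "0 \<le> x5" "0 \<le> x6"
        for x1 x2 x3 x4 x5 x6 :: real
        using that by (smt (verit))
      show ?thesis by (rule gen[OF main' p1(1) p1(4) p1(2) p1(3) p1(5)])
    qed
  qed
qed


theorem theorem1:
  shows "\<exists>clam0 C. clam0 > 0 \<and> C > 0 \<and>
    (\<forall>(n::nat) (q::nat) (pj::nat \<Rightarrow> nat) (N::nat) (Cv::nat \<Rightarrow> nat \<Rightarrow> nat)
       (W::nat \<Rightarrow> nat \<Rightarrow> real) (f::nat \<Rightarrow> real) (\<sigma>::real) (lam::real) (lam0::real).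
      n \<ge> 1 \<and> q \<ge> 1 \<and> (\<forall>j\<in>{1..q}. pj j \<ge> 1) \<and>
      (\<forall>i<n. \<forall>j\<in>{1..q}. Cv i j \<in> {1..pj j}) \<and>
      \<sigma> > 0 \<and> lam \<ge> 0 \<and>
      lam0 \<ge> clam0 * \<sigma>\<^sup>2 * ln (exp 1 * real (ptot q pj N)) / real n
      \<longrightarrow>
      (\<exists>A \<in> sets (noise_space n \<sigma>).
         measure (noise_space n \<sigma>) A \<ge> 1 - 4 * (exp 1 * real (ptot q pj N)) powr (-9) \<and>
         (\<forall>\<epsilon>\<in>A. \<forall>\<alpha>h \<beta>h.
            (\<forall>\<alpha> \<beta>. objective n q pj N Cv W lam lam0 (\<lambda>i. f i + \<epsilon> i) \<alpha>h \<beta>h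
                     \<le> objective n q pj N Cv W lam lam0 (\<lambda>i. f i + \<epsilon> i) \<alpha> \<beta>)
            \<longrightarrow>
            sqnorm n (\<lambda>i. f i - Xb q pj N Cv W \<beta>h i - \<alpha>h) / real n + lam * real (Kfun q pj \<beta>h)
            \<le> C * ((INF \<alpha>\<beta>::real \<times> (nat \<Rightarrow> real). risk n q pj N Cv W lam lam0 f (fst \<alpha>\<beta>) (snd \<alpha>\<beta>))
                   + \<sigma>\<^sup>2 * ln (exp 1 * real (ptot q pj N)) / real n))))"
proof (intro exI[of _ "320::real"] conjI allI impI)
  show "(0::real) < 320" by simp
  show "(0::real) < 320" by simp
  fix n q :: nat and pj :: "nat \<Rightarrow> nat" and N :: nat and Cv :: "nat \<Rightarrow> nat \<Rightarrow> nat"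
    and W :: "nat \<Rightarrow> nat \<Rightarrow> real" and f :: "nat \<Rightarrow> real" and \<sigma> lam lam0 :: real
  assume H: "1 \<le> n \<and> 1 \<le> q \<and> (\<forall>j\<in>{1..q}. 1 \<le> pj j) \<and> (\<forall>i<n. \<forall>j\<in>{1..q}. Cv i j \<in> {1..pj j}) \<and>
       0 < \<sigma> \<and> 0 \<le> lam \<and> 320 * \<sigma>\<^sup>2 * ln (exp 1 * real (ptot q pj N)) / real n \<le> lam0"
  then have n: "1 \<le> n" and q: "1 \<le> q" and pjpos: "\<forall>j\<in>{1..q}. 1 \<le> pj j"
    and cv: "\<forall>i<n. \<forall>j\<in>{1..q}. Cv i j \<in> {1..pj j}" and s: "0 < \<sigma>" and lam: "0 \<le> lam"
    and lam0: "320 * \<sigma>\<^sup>2 * ln (exp 1 * real (ptot q pj N)) / real n \<le> lam0" by auto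
  define p where "p = ptot q pj N"
  define L where "L = ln (exp 1 * real p)"
  have p1: "p \<ge> 1"
  proof -
    have "pj 1 \<le> Pcat q pj" unfolding Pcat_def using q by (intro member_le_sum) auto
    then show ?thesis using pjpos q unfolding p_def ptot_def by force
  qed
  have L1: "L \<ge> 1" unfolding L_def using p1 by (simp add: ln_mult)
  have npos: "real n > 0" using n by simp
  have s0: "\<sigma>^2 * L \<ge> 0" using L1 by simp
  have lam0': "real n * lam0 \<ge> 320 * (\<sigma>^2 * L)"
    using lam0 npos unfolding L_def p_def by (simp add: field_simps)
  have lam0pos: "lam0 > 0"
  proof -
    have "320 * (\<sigma>^2 * L) > 0" using s L1 by simp
    then have "real n * lam0 > 0" using lam0' by linarith
    then show ?thesis using npos by (simp add: zero_less_mult_iff)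
  qed
  define bs where "bs = (\<lambda>T. (\<lambda>i::nat. 1::real) # map (\<lambda>c i. design q pj N Cv W i c) (sorted_list_of_set T))"
  have "\<forall>T. \<exists>ud. orthonormal n (fst ud) (snd ud) \<and> snd ud \<le> length (bs T) \<and> (\<forall>b\<in>set (bs T). inspan n (fst ud) (snd ud) b)"
  proof
    fix T
    obtain us d where "orthonormal n us d \<and> d \<le> length (bs T) \<and> (\<forall>b\<in>set (bs T). inspan n us d b)"
      using gram_schmidt by blast
    then show "\<exists>ud. orthonormal n (fst ud) (snd ud) \<and> snd ud \<le> length (bs T) \<and> (\<forall>b\<in>set (bs T). inspan n (fst ud) (snd ud) b)"
      by (intro exI[of _ "(us, d)"]) simp
  qed
  then obtain F where F: "\<And>T. orthonormal n (fst (F T)) (snd (F T)) \<and> snd (F T) \<le> length (bs T) \<and> (\<forall>b\<in>set (bs T). inspan n (fst (F T)) (snd (F T)) b)"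
    by (metis choice)
  define us where "us = (\<lambda>T. fst (F T))"
  define d where "d = (\<lambda>T. snd (F T))"
  have on: "orthonormal n (us T) (d T)" for T using F unfolding us_def d_def by blast
  have dle: "d T \<le> card T + 1" if "T \<subseteq> {..<p}" for T
  proof -
    have "finite T" using that finite_subset by blast
    then show ?thesis using F[of T] unfolding d_def bs_def by simp
  qed
  have sp1: "inspan n (us T) (d T) (\<lambda>i. 1)" for T
    using F[of T] unfolding us_def d_def bs_def by simp
  have sp2: "inspan n (us T) (d T) (\<lambda>i. design q pj N Cv W i c)" if "T \<subseteq> {..<p}" "c \<in> T" for T c
  proof -
    have "finite T" using that finite_subset by blast
    then have "(\<lambda>i. design q pj N Cv W i c) \<in> set (bs T)" using that unfolding bs_def by auto
    then show ?thesis using F[of T] unfolding us_def d_def by blast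
  qed
  define Bad where "Bad = (\<lambda>T. {\<epsilon>\<in>space (noise_space n \<sigma>). 40*\<sigma>^2*(real (card T)+1)*L < (\<Sum>k<d T. (ip n (us T k) \<epsilon>)^2)})"
  define A where "A = space (noise_space n \<sigma>) - (\<Union>T\<in>Pow {..<p}. Bad T)"
  have PP: "A \<in> sets (noise_space n \<sigma>)" "measure (noise_space n \<sigma>) A \<ge> 1 - 4 * (exp 1 * real p) powr (-9)"
    using prob_part[of \<sigma> p n us d L Bad, OF s p1 on dle L_def] unfolding A_def Bad_def by auto
  show "\<exists>A\<in>sets (noise_space n \<sigma>).
         1 - 4 * (exp 1 * real (ptot q pj N)) powr - 9 \<le> measure (noise_space n \<sigma>) A \<and>
         (\<forall>\<epsilon>\<in>A. \<forall>\<alpha>h \<beta>h.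
            (\<forall>\<alpha> \<beta>. objective n q pj N Cv W lam lam0 (\<lambda>i. f i + \<epsilon> i) \<alpha>h \<beta>h
                     \<le> objective n q pj N Cv W lam lam0 (\<lambda>i. f i + \<epsilon> i) \<alpha> \<beta>) \<longrightarrow>
            sqnorm n (\<lambda>i. f i - Xb q pj N Cv W \<beta>h i - \<alpha>h) / real n + lam * real (Kfun q pj \<beta>h)
            \<le> 320 * ((INF \<alpha>\<beta>::real \<times> (nat \<Rightarrow> real). risk n q pj N Cv W lam lam0 f (fst \<alpha>\<beta>) (snd \<alpha>\<beta>))
                   + \<sigma>\<^sup>2 * ln (exp 1 * real (ptot q pj N)) / real n))"
  proof (intro bexI[OF _ PP(1)] conjI ballI allI impI)
    show "1 - 4 * (exp 1 * real (ptot q pj N)) powr - 9 \<le> measure (noise_space n \<sigma>) A"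
      using PP(2) unfolding p_def .
    fix \<epsilon> \<alpha>h \<beta>h
    assume eA: "\<epsilon> \<in> A"
    assume min: "\<forall>\<alpha> \<beta>. objective n q pj N Cv W lam lam0 (\<lambda>i. f i + \<epsilon> i) \<alpha>h \<beta>h
                     \<le> objective n q pj N Cv W lam lam0 (\<lambda>i. f i + \<epsilon> i) \<alpha> \<beta>"
    have good: "(\<Sum>k<d T. (ip n (us T k) \<epsilon>)^2) \<le> 40 * (\<sigma>^2 * L) * (real (card T) + 1)"
      if "T \<subseteq> {..<ptot q pj N}" for T
    proof -
      have "\<epsilon> \<notin> Bad T" "\<epsilon> \<in> space (noise_space n \<sigma>)" using eA that unfolding A_def p_def by auto
      then have "\<not> 40*\<sigma>^2*(real (card T)+1)*L < (\<Sum>k<d T. (ip n (us T k) \<epsilon>)^2)"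
        unfolding Bad_def by auto
      then show ?thesis by (simp add: algebra_simps)
    qed
    let ?LHS = "sqnorm n (\<lambda>i. f i - Xb q pj N Cv W \<beta>h i - \<alpha>h) / real n + lam * real (Kfun q pj \<beta>h)"
    let ?t = "\<sigma>\<^sup>2 * ln (exp 1 * real (ptot q pj N)) / real n"
    have tt: "?t = \<sigma>^2 * L / real n" unfolding L_def p_def ..
    have each: "?LHS \<le> 320 * (risk n q pj N Cv W lam lam0 f \<alpha> \<beta> + \<sigma>^2 * L / real n)" for \<alpha> \<beta>
      by (rule det_part[of n q pj Cv lam "\<sigma>^2 * L" lam0 N us d W \<epsilon> f \<alpha>h \<beta>h \<alpha> \<beta>])
         (use n pjpos cv lam s0 lam0' lam0pos sp1 sp2 good min in \<open>auto simp: p_def\<close>)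
    have inf: "?LHS / 320 - \<sigma>^2 * L / real n \<le> (INF \<alpha>\<beta>::real \<times> (nat \<Rightarrow> real). risk n q pj N Cv W lam lam0 f (fst \<alpha>\<beta>) (snd \<alpha>\<beta>))"
    proof (rule cINF_greatest)
      show "UNIV \<noteq> {}" by simp
      fix ab :: "real \<times> (nat \<Rightarrow> real)"
      show "?LHS / 320 - \<sigma>^2 * L / real n \<le> risk n q pj N Cv W lam lam0 f (fst ab) (snd ab)"
      proof -
        have aux: "x / 320 - z \<le> y" if "x \<le> 320 * (y + z)" for x y z :: real
          using that by (simp add: field_simps)
        show ?thesis by (rule aux[OF each[of "fst ab" "snd ab"]])
      qed
    qed
    show "?LHS \<le> 320 * ((INF \<alpha>\<beta>::real \<times> (nat \<Rightarrow> real). risk n q pj N Cv W lam lam0 f (fst \<alpha>\<beta>) (snd \<alpha>\<beta>)) + ?t)"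
    proof -
      have aux2: "x \<le> 320 * (y + z)" if "x / 320 - z \<le> y" for x y z :: real
        using that by (simp add: field_simps)
      show ?thesis unfolding tt by (rule aux2[OF inf])
    qed
  qed
qed


end
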